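(* Let $m\le n$, $1\le k\le m$, and let $X = X^*$ be a Hermitian operator on $\mathcal{H}_n\otimes\mathcal{H}_m$. Using the notation $\lambda_i^+$, $X^-$, $P_X^-$, $P_X^0$ defined in the context: 1. If $\|P_X^-\|_{S(k)} = 1$, then $X$ is not $k$-block positive. 2. Suppose $\|P_X^0 + P_X^-\|_{S(k)} < 1$ and \[ \lambda_i^+ \ge \frac{\|X^-\|_{S(k)}}{1 - \|P_X^0+P_X^-\|_{S(k)}} \quad \text{for all } i. \] Then $X$ is $k$-block positive. 3. Suppose $\|P_X^-\|_{S(k)} < 1$, all negative eigenvalues of $X$ are equal, $X$ is nonsingular, and \[ \lambda_i^+ < \frac{\|X^-\|_{S(k)}}{1-\|P_X^-\|_{S(k)}} \quad \text{for all } i. \] Then $X$ is not $k$-block positive.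
   Context: $\mathcal{H}_d=\mathbb{C}^d$ and $m\le n$. $SR$ denotes Schmidt rank, i.e. the number of nonzero singular values of the coefficient matrix of a vector in $\mathcal{H}_n\otimes\mathcal{H}_m$. $\|Y\|_{S(k)} := \sup\{|\langle w|Y|v\rangle| : |v\rangle,|w\rangle \text{ unit}, SR(|v\rangle),SR(|w\rangle)\le k\}$. A Hermitian $Y$ is $k$-block positive if $\langle v|Y|v\rangle\ge 0$ for all $|v\rangle$ with $SR(|v\rangle)\le k$. Equivalently, the map associated to $Y$ via the Choi–Jamiołkowski isomorphism is $k$-positive. For Hermitian $X$, fix an orthonormal eigenbasis: - the positive eigenvalues are $\lambda_i^+$ with eigenvectors $|v_i^+\rangle$; - the negative eigenvalues are $\lambda_i^-$ with eigenvectors $|v_i^-\rangle$; - the eigenvectors for eigenvalue $0$ are $|v_i^0\rangle$. Then $X^- := \sum_i \lambda_i^-|v_i^-\rangle\langle v_i^-|$, $P_X^- := \sum_i |v_i^-\rangle\langle v_i^-|$ is the projection onto the negative part, and $P_X^0 := \sum_i|v_i^0\rangle\langle v_i^0|$ is the projection onto the null space. *)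

theory Defs
  imports Jordan_Normal_Form.Schur_Decomposition Jordan_Normal_Form.DL_Rank
begin

text \<open>Vectors of H_n (x) H_m are complex vectors of dimension n*m; the basis vector
  e_i (x) f_j (i<n, j<m) corresponds to index i*m+j.\<close>

definition coeff_mat :: "nat \<Rightarrow> nat \<Rightarrow> complex vec \<Rightarrow> complex mat" where
  "coeff_mat n m v = mat n m (\<lambda>(i,j). v $ (i*m + j))"

definition schmidt_rank :: "nat \<Rightarrow> nat \<Rightarrow> complex vec \<Rightarrow> nat" where
  "schmidt_rank n m v = vec_space.rank n (coeff_mat n m v)"

definition unit_vec_c :: "nat \<Rightarrow> complex vec \<Rightarrow> bool" where
  "unit_vec_c d v \<longleftrightarrow> v \<in> carrier_vec d \<and> v \<bullet>c v = 1"

text \<open>S(k)-norm: sup of |<w|Y|v>| over unit v, w of Schmidt rank at most k.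
  Note <w|Y|v> = (Y v) . conj w.\<close>
definition sk_norm :: "nat \<Rightarrow> nat \<Rightarrow> nat \<Rightarrow> complex mat \<Rightarrow> real" where
  "sk_norm n m k Y = Sup {cmod ((Y *\<^sub>v v) \<bullet>c w) | v w.
      unit_vec_c (n*m) v \<and> unit_vec_c (n*m) w \<and>
      schmidt_rank n m v \<le> k \<and> schmidt_rank n m w \<le> k}"

definition hermitian_mat :: "complex mat \<Rightarrow> bool" where
  "hermitian_mat Y \<longleftrightarrow> square_mat Y \<and> mat_adjoint Y = Y"

definition k_block_positive :: "nat \<Rightarrow> nat \<Rightarrow> nat \<Rightarrow> complex mat \<Rightarrow> bool" where
  "k_block_positive n m k Y \<longleftrightarrow> hermitian_mat Y \<and>
     (\<forall>v. v \<in> carrier_vec (n*m) \<longrightarrow> schmidt_rank n m v \<le> k \<longrightarrow>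
        Im ((Y *\<^sub>v v) \<bullet>c v) = 0 \<and> 0 \<le> Re ((Y *\<^sub>v v) \<bullet>c v))"

definition real_diag :: "nat \<Rightarrow> (nat \<Rightarrow> real) \<Rightarrow> complex mat" where
  "real_diag d f = mat d d (\<lambda>(i,j). if i = j then complex_of_real (f i) else 0)"

definition eigenbasis :: "nat \<Rightarrow> complex mat \<Rightarrow> complex mat \<Rightarrow> (nat \<Rightarrow> real) \<Rightarrow> bool" where
  "eigenbasis d X U lam \<longleftrightarrow> U \<in> carrier_mat d d \<and> mat_adjoint U * U = 1\<^sub>m d \<and>
     X = U * real_diag d lam * mat_adjoint U"

definition spec_fun :: "nat \<Rightarrow> complex mat \<Rightarrow> (nat \<Rightarrow> real) \<Rightarrow> (real \<Rightarrow> real) \<Rightarrow> complex mat" where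
  "spec_fun d U lam f = U * real_diag d (\<lambda>i. f (lam i)) * mat_adjoint U"

definition neg_part :: "nat \<Rightarrow> complex mat \<Rightarrow> (nat \<Rightarrow> real) \<Rightarrow> complex mat" where
  "neg_part d U lam = spec_fun d U lam (\<lambda>t. if t < 0 then t else 0)"

definition neg_proj :: "nat \<Rightarrow> complex mat \<Rightarrow> (nat \<Rightarrow> real) \<Rightarrow> complex mat" where
  "neg_proj d U lam = spec_fun d U lam (\<lambda>t. if t < 0 then 1 else 0)"

definition null_proj :: "nat \<Rightarrow> complex mat \<Rightarrow> (nat \<Rightarrow> real) \<Rightarrow> complex mat" where
  "null_proj d U lam = spec_fun d U lam (\<lambda>t. if t = 0 then 1 else 0)"

end

theory Submission
  imports Defs "HOL-Analysis.Elementary_Metric_Spaces"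
begin


lemma adj_carrier: "A \<in> carrier_mat a b \<Longrightarrow> mat_adjoint A \<in> carrier_mat b a"
  unfolding mat_adjoint_def by auto
lemma adj_idx: "A \<in> carrier_mat a b \<Longrightarrow> i < b \<Longrightarrow> j < a \<Longrightarrow> mat_adjoint A $$ (i,j) = cnj (A $$ (j,i))"
  unfolding mat_adjoint_def by (auto simp: mat_of_rows_def)

lemma sprodc_sum: "w \<in> carrier_vec N \<Longrightarrow> v \<bullet>c w = (\<Sum>i<N. v $ i * cnj (w $ i))"
  by (auto simp: scalar_prod_def lessThan_atLeast0)

lemma adjoint_sprod:
  fixes A :: "complex mat"
  assumes A: "A \<in> carrier_mat a b" and x: "x \<in> carrier_vec b" and w: "w \<in> carrier_vec a"
  shows "(A *\<^sub>v x) \<bullet>c w = x \<bullet>c (mat_adjoint A *\<^sub>v w)"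
proof -
  have "(A *\<^sub>v x) \<bullet>c w = (\<Sum>i<a. (\<Sum>j<b. A $$ (i,j) * x $ j) * cnj (w $ i))"
    using A x w by (auto simp: sprodc_sum scalar_prod_def lessThan_atLeast0 intro!: sum.cong)
  also have "\<dots> = (\<Sum>j<b. x $ j * (\<Sum>i<a. A $$ (i,j) * cnj (w $ i)))"
    unfolding sum_distrib_left sum_distrib_right by (subst sum.swap) (simp add: mult_ac)
  also have "\<dots> = x \<bullet>c (mat_adjoint A *\<^sub>v w)"
    using A x w adj_carrier[OF A]
    by (subst sprodc_sum[of _ b]) (auto simp: scalar_prod_def lessThan_atLeast0 adj_idx sum_distrib_left intro!: sum.cong)
  finally show ?thesis .
qed

definition cf :: "complex mat \<Rightarrow> complex vec \<Rightarrow> nat \<Rightarrow> complex" where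
  "cf U v i = (mat_adjoint U *\<^sub>v v) $ i"

lemma real_diag_carrier: "real_diag N f \<in> carrier_mat N N" by (simp add: real_diag_def)

lemma diag_mult:
  assumes i: "i < N" and y: "y \<in> carrier_vec N"
  shows "(real_diag N f *\<^sub>v y) $ i = complex_of_real (f i) * y $ i"
proof -
  have "(real_diag N f *\<^sub>v y) $ i = (\<Sum>j<N. (if i = j then complex_of_real (f i) else 0) * y $ j)"
    using i y by (auto simp: real_diag_def scalar_prod_def lessThan_atLeast0 intro!: sum.cong)
  also have "\<dots> = (\<Sum>j<N. if j = i then complex_of_real (f i) * y $ j else 0)"
    by (rule sum.cong) auto
  also have "\<dots> = complex_of_real (f i) * y $ i" using i by simp
  finally show ?thesis .
qed

lemma quad:
  assumes U: "U \<in> carrier_mat N N" and v: "v \<in> carrier_vec N" and w: "w \<in> carrier_vec N"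
  shows "((U * real_diag N f * mat_adjoint U) *\<^sub>v v) \<bullet>c w
       = (\<Sum>i<N. complex_of_real (f i) * cf U v i * cnj (cf U w i))"
proof -
  have UH: "mat_adjoint U \<in> carrier_mat N N" using adj_carrier[OF U] .
  have D: "real_diag N f \<in> carrier_mat N N" by (rule real_diag_carrier)
  have "(U * real_diag N f * mat_adjoint U) *\<^sub>v v = U *\<^sub>v (real_diag N f *\<^sub>v (mat_adjoint U *\<^sub>v v))"
    using U UH D v by (simp add: assoc_mult_mat_vec[of _ N N _ N])
  hence "((U * real_diag N f * mat_adjoint U) *\<^sub>v v) \<bullet>c w
     = (real_diag N f *\<^sub>v (mat_adjoint U *\<^sub>v v)) \<bullet>c (mat_adjoint U *\<^sub>v w)"
    using adjoint_sprod[OF U _ w] D UH v by auto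
  also have "\<dots> = (\<Sum>i<N. (real_diag N f *\<^sub>v (mat_adjoint U *\<^sub>v v)) $ i * cnj (cf U w i))"
    using UH w by (subst sprodc_sum[of _ N]) (auto simp: cf_def)
  also have "\<dots> = (\<Sum>i<N. complex_of_real (f i) * cf U v i * cnj (cf U w i))"
    using diag_mult[of _ N "mat_adjoint U *\<^sub>v v" f] UH v by (auto simp: cf_def intro!: sum.cong)
  finally show ?thesis .
qed

lemma unitary_right:
  assumes U: "U \<in> carrier_mat N N" and "mat_adjoint U * U = 1\<^sub>m N"
  shows "U * mat_adjoint U = 1\<^sub>m N"
  using mat_mult_left_right_inverse[OF adj_carrier[OF U] U assms(2)] .

lemma parseval:
  assumes U: "U \<in> carrier_mat N N" and UU: "mat_adjoint U * U = 1\<^sub>m N" and v: "v \<in> carrier_vec N"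
  shows "v \<bullet>c v = (\<Sum>i<N. cf U v i * cnj (cf U v i))"
proof -
  have "v = U *\<^sub>v (mat_adjoint U *\<^sub>v v)"
    using unitary_right[OF U UU] U v adj_carrier[OF U] by (simp add: assoc_mult_mat_vec[symmetric, of _ N N _ N])
  hence "v \<bullet>c v = (U *\<^sub>v (mat_adjoint U *\<^sub>v v)) \<bullet>c v" by simp
  also have "\<dots> = (mat_adjoint U *\<^sub>v v) \<bullet>c (mat_adjoint U *\<^sub>v v)"
    using adjoint_sprod[OF U _ v] adj_carrier[OF U] v by auto
  also have "\<dots> = (\<Sum>i<N. cf U v i * cnj (cf U v i))"
    using adj_carrier[OF U] v by (subst sprodc_sum[of _ N]) (auto simp: cf_def)
  finally show ?thesis .
qed


lemma (in vec_space) L1: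
  assumes A: "A \<in> carrier_mat n nc" and r: "r \<le> rank A"
  shows "\<exists>B. B \<in> carrier_mat n r \<and> set (cols B) \<subseteq> set (cols A) \<and>
              (\<forall>v\<in>carrier_vec r. B *\<^sub>v v = 0\<^sub>v n \<longrightarrow> v = 0\<^sub>v r)"
proof -
  obtain S where S: "maximal S (\<lambda>T. T \<subseteq> set (cols A) \<and> lin_indpt T)"
    using maximal_exists[of "(\<lambda>T. T \<subseteq> set (cols A) \<and> lin_indpt T)" "card (set (cols A))" "{}"]
    by (meson List.finite_set card_mono empty_iff empty_subsetI finite_lin_indpt2 rev_finite_subset)
  have rk: "rank A = card S" using rank_card_indpt[OF A S] .
  have Ssub: "S \<subseteq> set (cols A)" and Sli: "lin_indpt S" using S by (auto simp: maximal_def)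
  obtain T where T: "T \<subseteq> S" "card T = r" "finite T" using obtain_subset_with_card_n[of r S] r rk by auto
  have Tli: "lin_indpt T" using subset_li_is_li[OF Sli T(1)] .
  obtain ts where ts: "set ts = T" "distinct ts" using finite_distinct_list[OF T(3)] by auto
  have lts: "length ts = r" using ts T(2) distinct_card by fastforce
  have tsA: "set ts \<subseteq> set (cols A)" using ts T(1) Ssub by simp
  have dA: "dim_row A = n" using A by (rule carrier_matD(1))
  have tsc: "set ts \<subseteq> carrier_vec n" using subset_trans[OF tsA cols_dim[of A]] unfolding dA .
  define B where "B = mat_of_cols n ts"
  have B: "B \<in> carrier_mat n r" using mat_of_cols_carrier(1)[of n ts] lts unfolding B_def by simp
  have cB: "cols B = ts" unfolding B_def using tsc by (simp add: cols_mat_of_cols)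
  show ?thesis
  proof (intro exI conjI ballI impI)
    show "B \<in> carrier_mat n r" by fact
    show "set (cols B) \<subseteq> set (cols A)" using cB ts T(1) Ssub by auto
    fix v assume v: "v \<in> carrier_vec r" and Bv: "B *\<^sub>v v = 0\<^sub>v n"
    show "v = 0\<^sub>v r"
    proof (rule ccontr)
      assume "v \<noteq> 0\<^sub>v r"
      from lin_depI[OF B v this Bv] cB ts have "lin_dep T" by simp
      with Tli show False by simp
    qed
  qed
qed

lemma mult_unit_vec_col: "(B :: 'a :: semiring_1 mat) \<in> carrier_mat n r \<Longrightarrow> a < r \<Longrightarrow> B *\<^sub>v unit_vec r a = col B a"
  by (rule eq_vecI) auto

lemma (in vec_space) L2:
  assumes A: "A \<in> carrier_mat n nc" and B: "B \<in> carrier_mat n r"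
    and sub: "set (cols B) \<subseteq> set (cols A)"
    and ker: "\<forall>v\<in>carrier_vec r. B *\<^sub>v v = 0\<^sub>v n \<longrightarrow> v = 0\<^sub>v r"
  shows "r \<le> rank A"
proof -
  have dist: "distinct (cols B)"
  proof (rule ccontr)
    assume "\<not> distinct (cols B)"
    then obtain a b where ab: "a \<noteq> b" "a < r" "b < r" "col B a = col B b"
      using B by (auto simp: distinct_conv_nth)
    define v :: "'a vec" where "v = unit_vec r a - unit_vec r b"
    have v: "v \<in> carrier_vec r" by (simp add: v_def)
    have "v $ a = 1" using ab by (simp add: v_def)
    hence vn: "v \<noteq> 0\<^sub>v r" using ab by auto
    have "B *\<^sub>v v = B *\<^sub>v unit_vec r a - B *\<^sub>v unit_vec r b"
      unfolding v_def using B by (simp add: mult_minus_distrib_mat_vec)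
    also have "\<dots> = 0\<^sub>v n" using ab B by (simp add: mult_unit_vec_col)  
    finally show False using ker v vn by blast
  qed
  have li: "lin_indpt (set (cols B))"
  proof
    assume "lin_dep (set (cols B))"
    from lin_depE[OF B this dist] ker show False by blast
  qed
  have "card (set (cols B)) = r" using dist B by (simp add: distinct_card)
  with rank_ge_card_indpt[OF A sub li] show ?thesis by simp
qed


lemma sq0:
  fixes x :: "complex vec"
  assumes x: "x \<in> carrier_vec N" and z: "x \<bullet>c x = 0"
  shows "x = 0\<^sub>v N"
proof -
  have "x \<bullet>c x = (\<Sum>i<N. complex_of_real ((cmod (x $ i))\<^sup>2))"
    by (subst sprodc_sum[OF x], rule sum.cong, simp, simp add: complex_norm_square[symmetric])
  hence "(\<Sum>i<N. (cmod (x $ i))\<^sup>2) = 0" using z by (metis of_real_eq_0_iff of_real_sum)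
  hence "\<forall>i\<in>{..<N}. (cmod (x $ i))\<^sup>2 = 0" by (subst (asm) sum_nonneg_eq_0_iff) auto
  thus ?thesis using x by (intro eq_vecI) auto
qed

lemma K:
  fixes B :: "complex mat"
  assumes B: "B \<in> carrier_mat n r"
  shows "(\<forall>v\<in>carrier_vec r. B *\<^sub>v v = 0\<^sub>v n \<longrightarrow> v = 0\<^sub>v r) \<longleftrightarrow> det (mat_adjoint B * B) \<noteq> 0"
proof -
  have G: "mat_adjoint B * B \<in> carrier_mat r r" using adj_carrier[OF B] B by auto
  have eq: "(mat_adjoint B * B) *\<^sub>v v = 0\<^sub>v r \<longleftrightarrow> B *\<^sub>v v = 0\<^sub>v n" if v: "v \<in> carrier_vec r" for v
  proof
    assume h: "(mat_adjoint B * B) *\<^sub>v v = 0\<^sub>v r"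
    have "(B *\<^sub>v v) \<bullet>c (B *\<^sub>v v) = v \<bullet>c (mat_adjoint B *\<^sub>v (B *\<^sub>v v))"
      using adjoint_sprod[OF B v] B v by auto
    also have "mat_adjoint B *\<^sub>v (B *\<^sub>v v) = 0\<^sub>v r"
      using h adj_carrier[OF B] B v by (simp add: assoc_mult_mat_vec)
    finally have "(B *\<^sub>v v) \<bullet>c (B *\<^sub>v v) = 0" using v by simp
    thus "B *\<^sub>v v = 0\<^sub>v n" using sq0[OF mult_mat_vec_carrier[OF B v]] by auto
  next
    assume "B *\<^sub>v v = 0\<^sub>v n"
    thus "(mat_adjoint B * B) *\<^sub>v v = 0\<^sub>v r"
      using adj_carrier[OF B] B v by (simp add: assoc_mult_mat_vec) (intro eq_vecI, auto)
  qed
  show ?thesis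
    unfolding det_0_iff_vec_prod_zero_field[OF G, symmetric, THEN sym] 
    using eq by auto
qed

definition selc :: "complex mat \<Rightarrow> nat \<Rightarrow> nat \<Rightarrow> (nat \<Rightarrow> nat) \<Rightarrow> complex mat" where
  "selc A n r j = mat n r (\<lambda>(i,a). A $$ (i, j a))"

definition gramj :: "complex mat \<Rightarrow> nat \<Rightarrow> nat \<Rightarrow> (nat \<Rightarrow> nat) \<Rightarrow> complex mat" where
  "gramj A n r j = mat_adjoint (selc A n r j) * selc A n r j"

lemma gramj_idx:
  assumes "a < r" "b < r"
  shows "gramj A n r j $$ (a,b) = (\<Sum>i<n. cnj (A $$ (i, j a)) * A $$ (i, j b))"
proof -
  have S: "selc A n r j \<in> carrier_mat n r" by (simp add: selc_def)
  have ad: "mat_adjoint (selc A n r j) $$ (a,i) = cnj (A $$ (i, j a))" if "i < n" for i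
    using adj_idx[OF S assms(1) that] that assms by (simp add: selc_def)
  have "gramj A n r j $$ (a,b) = (\<Sum>i<n. mat_adjoint (selc A n r j) $$ (a,i) * selc A n r j $$ (i,b))"
    using assms adj_carrier[OF S] S unfolding gramj_def
    by (subst index_mult_mat) (auto simp: scalar_prod_def lessThan_atLeast0 intro!: sum.cong)
  also have "\<dots> = (\<Sum>i<n. cnj (A $$ (i, j a)) * A $$ (i, j b))"
    using ad assms by (auto simp: selc_def intro!: sum.cong)
  finally show ?thesis .
qed

lemma gramj_carrier: "gramj A n r j \<in> carrier_mat r r"
  unfolding gramj_def selc_def mat_adjoint_def by auto

lemma SR1:
  assumes A: "A \<in> carrier_mat n m" and r: "r \<le> vec_space.rank n A"
  shows "\<exists>j. (\<forall>a<r. j a < m) \<and> det (gramj A n r j) \<noteq> 0"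
proof -
  obtain B where B: "B \<in> carrier_mat n r" "set (cols B) \<subseteq> set (cols A)"
    "\<forall>v\<in>carrier_vec r. B *\<^sub>v v = 0\<^sub>v n \<longrightarrow> v = 0\<^sub>v r"
    using vec_space.L1[OF A r] by blast
  have "\<forall>a. \<exists>jj. a < r \<longrightarrow> jj < m \<and> col B a = col A jj"
  proof (intro allI impI)
    fix a
    show "\<exists>jj. a < r \<longrightarrow> jj < m \<and> col B a = col A jj"
    proof (cases "a < r")
      case True
      hence "col B a \<in> set (cols A)" using B by (auto simp: cols_def)
      then obtain jj where "jj < m" "col B a = col A jj" using A by (auto simp: cols_def in_set_conv_nth)
      thus ?thesis by auto
    qed auto
  qed
  then obtain j where j: "\<And>a. a < r \<Longrightarrow> j a < m \<and> col B a = col A (j a)" by metis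
  have "selc A n r j = B"
  proof (rule eq_matI)
    fix i a assume "i < dim_row B" "a < dim_col B"
    hence "i < n" "a < r" using B by auto
    hence "B $$ (i,a) = col B a $ i" using B by auto
    also have "\<dots> = A $$ (i, j a)" using j[OF \<open>a < r\<close>] \<open>i < n\<close> A by auto
    finally show "selc A n r j $$ (i, a) = B $$ (i, a)" using \<open>i<n\<close> \<open>a<r\<close> by (simp add: selc_def)
  qed (use B in \<open>auto simp: selc_def\<close>)
  hence "det (gramj A n r j) \<noteq> 0" using K[OF B(1)] B(3) by (simp add: gramj_def)
  thus ?thesis using j by blast
qed

lemma SR2:
  assumes A: "A \<in> carrier_mat n m" and j: "\<forall>a<r. j a < m" and d: "det (gramj A n r j) \<noteq> 0"
  shows "r \<le> vec_space.rank n A"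
proof -
  have S: "selc A n r j \<in> carrier_mat n r" by (simp add: selc_def)
  have ker: "\<forall>v\<in>carrier_vec r. selc A n r j *\<^sub>v v = 0\<^sub>v n \<longrightarrow> v = 0\<^sub>v r"
    using K[OF S] d by (simp add: gramj_def)
  have "set (cols (selc A n r j)) \<subseteq> set (cols A)"
  proof
    fix c assume "c \<in> set (cols (selc A n r j))"
    then obtain a where a: "a < r" "c = col (selc A n r j) a" using S by (auto simp: cols_def)
    have "c = col A (j a)" using a A j by (intro eq_vecI) (auto simp: selc_def)
    thus "c \<in> set (cols A)" using j a A by (auto simp: cols_def)
  qed
  from vec_space.L2[OF A S this ker] show ?thesis .
qed


lemma coeff_carrier: "coeff_mat n m v \<in> carrier_mat n m" by (simp add: coeff_mat_def)
lemma coeff_idx: "i < n \<Longrightarrow> j < m \<Longrightarrow> coeff_mat n m v $$ (i,j) = v $ (i*m + j)"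
  by (simp add: coeff_mat_def)

lemma idx_lt: "i < n \<Longrightarrow> j < m \<Longrightarrow> i*m + j < n*(m::nat)"
proof -
  assume "i < n" "j < m"
  hence "i*m + j < i*m + m" by simp
  also have "\<dots> = (i+1)*m" by simp
  also have "\<dots> \<le> n*m" using \<open>i<n\<close> by (intro mult_right_mono) auto
  finally show ?thesis .
qed

lemma det_tendsto:
  fixes M :: "nat \<Rightarrow> complex mat"
  assumes M: "\<And>l. M l \<in> carrier_mat r r" and M0: "M0 \<in> carrier_mat r r"
    and conv: "\<And>a b. a < r \<Longrightarrow> b < r \<Longrightarrow> (\<lambda>l. M l $$ (a,b)) \<longlonglongrightarrow> M0 $$ (a,b)"
  shows "(\<lambda>l. det (M l)) \<longlonglongrightarrow> det M0"
proof -
  have d: "det (M l) = (\<Sum>p\<in>{p. p permutes {0..<r}}. signof p * (\<Prod>i=0..<r. M l $$ (i, p i)))" for l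
    using M[of l] by (simp add: det_def)
  have d0: "det M0 = (\<Sum>p\<in>{p. p permutes {0..<r}}. signof p * (\<Prod>i=0..<r. M0 $$ (i, p i)))"
    using M0 by (simp add: det_def)
  show ?thesis unfolding d d0
  proof (intro tendsto_sum tendsto_mult tendsto_const tendsto_prod)
    fix p i assume "p \<in> {p. p permutes {0..<r}}" "i \<in> {0..<r}"
    hence "p i < r" "i < r" by (auto simp: permutes_in_image)
    thus "(\<lambda>l. M l $$ (i, p i)) \<longlonglongrightarrow> M0 $$ (i, p i)" using conv by blast
  qed
qed

lemma gramj_coeff_tendsto:
  assumes x: "\<And>t. t < n*m \<Longrightarrow> (\<lambda>l. x l $ t) \<longlonglongrightarrow> v $ t" and j: "\<forall>a<r. j a < m"
  shows "(\<lambda>l. det (gramj (coeff_mat n m (x l)) n r j)) \<longlonglongrightarrow> det (gramj (coeff_mat n m v) n r j)"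
proof (rule det_tendsto[OF gramj_carrier gramj_carrier])
  fix a b assume ab: "a < r" "b < r"
  have e: "gramj (coeff_mat n m w) n r j $$ (a,b) = (\<Sum>i<n. cnj (w $ (i*m + j a)) * w $ (i*m + j b))" for w
    using ab j by (simp add: gramj_idx coeff_idx)
  show "(\<lambda>l. gramj (coeff_mat n m (x l)) n r j $$ (a, b)) \<longlonglongrightarrow> gramj (coeff_mat n m v) n r j $$ (a, b)"
    unfolding e
  proof (intro tendsto_sum tendsto_mult tendsto_cnj)
    fix i assume "i \<in> {..<n}"
    thus "(\<lambda>l. x l $ (i*m + j a)) \<longlonglongrightarrow> v $ (i*m + j a)" "(\<lambda>l. x l $ (i*m + j b)) \<longlonglongrightarrow> v $ (i*m + j b)"
      using x idx_lt j ab by auto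
  qed
qed

lemma SR_closed:
  assumes x: "\<And>t. t < n*m \<Longrightarrow> (\<lambda>l. x l $ t) \<longlonglongrightarrow> v $ t"
    and r: "\<And>l. schmidt_rank n m (x l) \<le> k"
  shows "schmidt_rank n m v \<le> k"
proof (rule ccontr)
  assume "\<not> ?thesis"
  hence "Suc k \<le> vec_space.rank n (coeff_mat n m v)" by (simp add: schmidt_rank_def)
  then obtain j where j: "\<forall>a<Suc k. j a < m" and d: "det (gramj (coeff_mat n m v) n (Suc k) j) \<noteq> 0"
    using SR1[OF coeff_carrier] by blast
  have "\<forall>\<^sub>F l in sequentially. det (gramj (coeff_mat n m (x l)) n (Suc k) j) \<noteq> 0"
    using tendsto_imp_eventually_ne[OF gramj_coeff_tendsto[OF x j] d] .
  then obtain l where "det (gramj (coeff_mat n m (x l)) n (Suc k) j) \<noteq> 0"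
    by (meson eventually_sequentially order_refl)
  from SR2[OF coeff_carrier j this] r[of l] show False by (simp add: schmidt_rank_def)
qed

lemma SR_scale:
  assumes r: "schmidt_rank n m v \<le> k" and a: "a \<noteq> 0" and v: "v \<in> carrier_vec (n*m)"
  shows "schmidt_rank n m (a \<cdot>\<^sub>v v) \<le> k"
proof (rule ccontr)
  assume "\<not> ?thesis"
  hence "Suc k \<le> vec_space.rank n (coeff_mat n m (a \<cdot>\<^sub>v v))" by (simp add: schmidt_rank_def)
  then obtain j where j: "\<forall>a<Suc k. j a < m" and d: "det (gramj (coeff_mat n m (a \<cdot>\<^sub>v v)) n (Suc k) j) \<noteq> 0"
    using SR1[OF coeff_carrier] by blast
  have "dim_vec v = n*m \<Longrightarrow> True" by simp
  have eq: "gramj (coeff_mat n m (a \<cdot>\<^sub>v v)) n (Suc k) j = (cnj a * a) \<cdot>\<^sub>m gramj (coeff_mat n m v) n (Suc k) j"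
  proof (rule eq_matI)
    fix b c assume "b < dim_row ((cnj a * a) \<cdot>\<^sub>m gramj (coeff_mat n m v) n (Suc k) j)"
      "c < dim_col ((cnj a * a) \<cdot>\<^sub>m gramj (coeff_mat n m v) n (Suc k) j)"
    hence bc: "b < Suc k" "c < Suc k" using gramj_carrier[of "coeff_mat n m v" n "Suc k" j] by auto
    have jb: "j b < m" "j c < m" using j bc by auto
    have "gramj (coeff_mat n m (a \<cdot>\<^sub>v v)) n (Suc k) j $$ (b, c)
       = (\<Sum>i<n. cnj ((a \<cdot>\<^sub>v v) $ (i*m + j b)) * (a \<cdot>\<^sub>v v) $ (i*m + j c))"
      using bc jb by (simp add: gramj_idx coeff_idx)
    also have "\<dots> = (\<Sum>i<n. (cnj a * a) * (cnj (v $ (i*m + j b)) * v $ (i*m + j c)))"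
      using idx_lt[of _ n _ m] jb v by (intro sum.cong) auto
    also have "\<dots> = (cnj a * a) * gramj (coeff_mat n m v) n (Suc k) j $$ (b, c)"
      using bc jb by (simp add: gramj_idx coeff_idx sum_distrib_left)
    finally show "gramj (coeff_mat n m (a \<cdot>\<^sub>v v)) n (Suc k) j $$ (b, c) = ((cnj a * a) \<cdot>\<^sub>m gramj (coeff_mat n m v) n (Suc k) j) $$ (b, c)"
      using bc gramj_carrier[of "coeff_mat n m v" n "Suc k" j] by simp
  qed (use gramj_carrier[of "coeff_mat n m v" n "Suc k" j] gramj_carrier[of "coeff_mat n m (a \<cdot>\<^sub>v v)" n "Suc k" j] in auto)
  have "det (gramj (coeff_mat n m v) n (Suc k) j) \<noteq> 0" using d unfolding eq by simp
  from SR2[OF coeff_carrier j this] r show False by (simp add: schmidt_rank_def)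
qed


lemma normsq: "v \<in> carrier_vec N \<Longrightarrow> v \<bullet>c v = complex_of_real (\<Sum>i<N. (cmod (v $ i))\<^sup>2)"
  by (subst sprodc_sum, assumption, simp only: of_real_sum, rule sum.cong, simp, simp add: complex_norm_square[symmetric])

lemma unit_normsq: "unit_vec_c N v \<Longrightarrow> (\<Sum>i<N. (cmod (v $ i))\<^sup>2) = 1"
  unfolding unit_vec_c_def using normsq[of v N] by (metis of_real_eq_1_iff)

lemma unit_idx: assumes "unit_vec_c N v" "t < N" shows "cmod (v $ t) \<le> 1"
proof -
  have "(cmod (v $ t))\<^sup>2 \<le> (\<Sum>i<N. (cmod (v $ i))\<^sup>2)"
    using assms(2) by (intro member_le_sum) auto
  hence "(cmod (v $ t))\<^sup>2 \<le> 1" using unit_normsq[OF assms(1)] by simp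
  thus ?thesis by (simp add: power_le_one_iff)
qed

lemma sk_elem_bound:
  assumes Y: "Y \<in> carrier_mat N N" and v: "unit_vec_c N v" and w: "unit_vec_c N w"
  shows "cmod ((Y *\<^sub>v v) \<bullet>c w) \<le> (\<Sum>a<N. \<Sum>b<N. cmod (Y $$ (a,b)))"
proof -
  have vc: "v \<in> carrier_vec N" and wc: "w \<in> carrier_vec N" using v w by (auto simp: unit_vec_c_def)
  have "(Y *\<^sub>v v) \<bullet>c w = (\<Sum>a<N. \<Sum>b<N. Y $$ (a,b) * v $ b * cnj (w $ a))"
    using Y vc wc by (subst sprodc_sum[OF wc]) (auto simp: scalar_prod_def lessThan_atLeast0 sum_distrib_right intro!: sum.cong)
  hence "cmod ((Y *\<^sub>v v) \<bullet>c w) \<le> (\<Sum>a<N. cmod (\<Sum>b<N. Y $$ (a,b) * v $ b * cnj (w $ a)))"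
    by (simp only: norm_sum)
  also have "\<dots> \<le> (\<Sum>a<N. \<Sum>b<N. cmod (Y $$ (a,b) * v $ b * cnj (w $ a)))"
    by (intro sum_mono norm_sum)
  also have "\<dots> \<le> (\<Sum>a<N. \<Sum>b<N. cmod (Y $$ (a,b)))"
  proof (intro sum_mono)
    fix a b assume "a \<in> {..<N}" "b \<in> {..<N}"
    hence "cmod (v $ b) \<le> 1" "cmod (w $ a) \<le> 1" using unit_idx v w by auto
    hence "cmod (v $ b) * cmod (w $ a) \<le> 1" by (intro mult_le_one) auto
    hence "cmod (Y $$ (a,b)) * (cmod (v $ b) * cmod (w $ a)) \<le> cmod (Y $$ (a,b)) * 1"
      by (intro mult_left_mono) auto
    thus "cmod (Y $$ (a,b) * v $ b * cnj (w $ a)) \<le> cmod (Y $$ (a,b))"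
      by (simp add: norm_mult mult.assoc)
  qed
  finally show ?thesis .
qed

definition skset :: "nat \<Rightarrow> nat \<Rightarrow> nat \<Rightarrow> complex mat \<Rightarrow> real set" where
  "skset n m k Y = {cmod ((Y *\<^sub>v v) \<bullet>c w) | v w.
      unit_vec_c (n*m) v \<and> unit_vec_c (n*m) w \<and>
      schmidt_rank n m v \<le> k \<and> schmidt_rank n m w \<le> k}"

lemma sk_norm_skset: "sk_norm n m k Y = Sup (skset n m k Y)"
  by (simp add: sk_norm_def skset_def)

lemma unit0: assumes "0 < n" "0 < m" "1 \<le> k"
  shows "unit_vec_c (n*m) (unit_vec (n*m) 0)" "schmidt_rank n m (unit_vec (n*m) 0) \<le> k"
proof -
  have "(\<Sum>i = 0..<n * m. (if i = 0 then 1 else 0) * cnj (if i = 0 then 1 else 0)) = (\<Sum>i = 0..<n * m. if i = 0 then 1 else (0::complex))"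
    by (rule sum.cong) auto
  also have "\<dots> = 1" using assms by simp
  finally show "unit_vec_c (n*m) (unit_vec (n*m) 0)" using assms
    by (simp add: unit_vec_c_def scalar_prod_def)
  have "vec_space.rank n (coeff_mat n m (unit_vec (n*m) 0)) \<le> 1"
  proof (rule vec_space.rank_le_1_product_entries[OF coeff_carrier, where f="\<lambda>i. if i = 0 then 1 else 0" and g="\<lambda>j. if j = 0 then 1 else 0"])
    fix r c assume "r < dim_row (coeff_mat n m (unit_vec (n*m) 0))" "c < dim_col (coeff_mat n m (unit_vec (n*m) 0))"
    hence rc: "r < n" "c < m" by (auto simp: coeff_mat_def)
    have "r*m + c = 0 \<longleftrightarrow> r = 0 \<and> c = 0" using assms by auto
    thus "coeff_mat n m (unit_vec (n*m) 0) $$ (r, c) = (if r = 0 then 1 else 0) * (if c = 0 then 1 else 0)"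
      using rc idx_lt[OF rc] by (simp add: coeff_idx)
  qed
  thus "schmidt_rank n m (unit_vec (n*m) 0) \<le> k" using assms by (simp add: schmidt_rank_def)
qed

lemma skset_ne: assumes "0 < n" "0 < m" "1 \<le> k" shows "skset n m k Y \<noteq> {}"
  using unit0[OF assms] unfolding skset_def by blast

lemma skset_bdd: assumes "Y \<in> carrier_mat (n*m) (n*m)" shows "bdd_above (skset n m k Y)"
  unfolding skset_def bdd_above_def using sk_elem_bound[OF assms] by blast

lemma sk_le:
  assumes "Y \<in> carrier_mat (n*m) (n*m)" "unit_vec_c (n*m) v" "unit_vec_c (n*m) w"
    "schmidt_rank n m v \<le> k" "schmidt_rank n m w \<le> k"
  shows "cmod ((Y *\<^sub>v v) \<bullet>c w) \<le> sk_norm n m k Y"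
  unfolding sk_norm_skset using assms by (intro cSup_upper skset_bdd) (auto simp: skset_def)

lemma sk_nonneg:
  assumes "Y \<in> carrier_mat (n*m) (n*m)" "0 < n" "0 < m" "1 \<le> k"
  shows "0 \<le> sk_norm n m k Y"
  using sk_le[OF assms(1) unit0(1)[OF assms(2-4)] unit0(1)[OF assms(2-4)] unit0(2)[OF assms(2-4)] unit0(2)[OF assms(2-4)]]
  by (meson norm_ge_zero order_trans)

lemma sk_approx:
  assumes "Y \<in> carrier_mat (n*m) (n*m)" "0 < n" "0 < m" "1 \<le> k" "0 < e"
  shows "\<exists>v w. unit_vec_c (n*m) v \<and> unit_vec_c (n*m) w \<and> schmidt_rank n m v \<le> k \<and> schmidt_rank n m w \<le> k
      \<and> sk_norm n m k Y - e < cmod ((Y *\<^sub>v v) \<bullet>c w)"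
proof -
  have "sk_norm n m k Y - e < Sup (skset n m k Y)" using assms(5) by (simp add: sk_norm_skset)
  then obtain x where x: "x \<in> skset n m k Y" "sk_norm n m k Y - e < x"
    using less_cSup_iff[OF skset_ne[OF assms(2-4)] skset_bdd[OF assms(1)]] by blast
  from x(1) obtain v w where vw: "x = cmod ((Y *\<^sub>v v) \<bullet>c w)" "unit_vec_c (n*m) v" "unit_vec_c (n*m) w"
      "schmidt_rank n m v \<le> k" "schmidt_rank n m w \<le> k"
    unfolding skset_def mem_Collect_eq by blast
  show ?thesis using vw x(2) by blast
qed

lemma sk_least:
  assumes "0 < n" "0 < m" "1 \<le> k"
    and "\<And>v w. unit_vec_c (n*m) v \<Longrightarrow> unit_vec_c (n*m) w \<Longrightarrow> schmidt_rank n m v \<le> k \<Longrightarrow> schmidt_rank n m w \<le> k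
      \<Longrightarrow> cmod ((Y *\<^sub>v v) \<bullet>c w) \<le> B"
  shows "sk_norm n m k Y \<le> B"
  unfolding sk_norm_skset
proof (rule cSup_least)
  show "skset n m k Y \<noteq> {}" by (rule skset_ne[OF assms(1-3)])
  fix x assume "x \<in> skset n m k Y"
  then obtain v w where vw: "x = cmod ((Y *\<^sub>v v) \<bullet>c w)" "unit_vec_c (n*m) v" "unit_vec_c (n*m) w"
      "schmidt_rank n m v \<le> k" "schmidt_rank n m w \<le> k"
    unfolding skset_def mem_Collect_eq by blast
  show "x \<le> B" using vw assms(4) by simp
qed


lemma sprod_self_tendsto:
  fixes x :: "nat \<Rightarrow> complex vec"
  assumes x: "\<And>t. t < N \<Longrightarrow> (\<lambda>l. x l $ t) \<longlonglongrightarrow> v $ t"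
    and xc: "\<And>l. x l \<in> carrier_vec N" and vc: "v \<in> carrier_vec N"
  shows "(\<lambda>l. x l \<bullet>c x l) \<longlonglongrightarrow> v \<bullet>c v"
proof -
  have "(\<lambda>l. \<Sum>t<N. x l $ t * cnj (x l $ t)) \<longlonglongrightarrow> (\<Sum>t<N. v $ t * cnj (v $ t))"
    using x by (intro tendsto_intros) auto
  moreover have "(\<lambda>l. x l \<bullet>c x l) = (\<lambda>l. \<Sum>t<N. x l $ t * cnj (x l $ t))"
    by (rule ext, rule sprodc_sum[OF xc])
  ultimately show ?thesis using vc by (simp add: sprodc_sum)
qed

lemma attain:
  fixes G :: "complex vec \<Rightarrow> real"
  assumes cont: "\<And>x v. (\<And>l. x l \<in> carrier_vec (n*m)) \<Longrightarrow> v \<in> carrier_vec (n*m) \<Longrightarrow>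
         (\<And>t. t < n*m \<Longrightarrow> (\<lambda>l. x l $ t) \<longlonglongrightarrow> v $ t) \<Longrightarrow> (\<lambda>l. G (x l)) \<longlonglongrightarrow> G v"
    and appr: "\<And>e. 0 < e \<Longrightarrow> \<exists>v. unit_vec_c (n*m) v \<and> schmidt_rank n m v \<le> k \<and> p - e < G v"
  shows "\<exists>v. unit_vec_c (n*m) v \<and> schmidt_rank n m v \<le> k \<and> p \<le> G v"
proof -
  have "\<forall>l. \<exists>v. unit_vec_c (n*m) v \<and> schmidt_rank n m v \<le> k \<and> p - inverse (real (Suc l)) < G v"
    using appr by simp
  then obtain x where x: "\<And>l. unit_vec_c (n*m) (x l)" "\<And>l. schmidt_rank n m (x l) \<le> k"
      "\<And>l. p - inverse (real (Suc l)) < G (x l)" by metis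
  have xc: "\<And>l. x l \<in> carrier_vec (n*m)" using x(1) by (simp add: unit_vec_c_def)
  have "\<forall>\<delta>\<subseteq>{..<n*m}. \<exists>g r. strict_mono r \<and>
     (\<forall>\<epsilon>>0. \<forall>\<^sub>F l in sequentially. \<forall>i\<in>\<delta>. dist ((\<lambda>t. (Re (x (r l) $ t), Im (x (r l) $ t))) i) (g i) < \<epsilon>)"
  proof (rule compact_lemma_general[where f="\<lambda>l t. (Re (x l $ t), Im (x l $ t))" and proj="\<lambda>g t. g t"
        and unproj="\<lambda>g. g"])
    fix t assume t: "t \<in> {..<n*m}"
    have "norm (Re (x l $ t), Im (x l $ t)) \<le> 1" for l
    proof -
      have "norm (Re (x l $ t), Im (x l $ t)) = cmod (x l $ t)"
        by (simp add: norm_prod_def cmod_def)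
      also have "\<dots> \<le> 1" using unit_idx[OF x(1)] t by auto
      finally show ?thesis .
    qed
    thus "bounded ((\<lambda>g. g t) ` range (\<lambda>l t. (Re (x l $ t), Im (x l $ t))))"
      unfolding bounded_iff by auto
  qed auto
  then obtain g r where r: "strict_mono r"
    and conv: "\<forall>\<epsilon>>0. \<forall>\<^sub>F l in sequentially. \<forall>i\<in>{..<n*m}. dist (Re (x (r l) $ i), Im (x (r l) $ i)) (g i) < \<epsilon>"
    by blast
  define v where "v = vec (n*m) (\<lambda>t. Complex (fst (g t)) (snd (g t)))"
  have vc: "v \<in> carrier_vec (n*m)" by (simp add: v_def)
  have cv: "(\<lambda>l. x (r l) $ t) \<longlonglongrightarrow> v $ t" if t: "t < n*m" for t
  proof -
    have P: "(\<lambda>l. (Re (x (r l) $ t), Im (x (r l) $ t))) \<longlonglongrightarrow> g t"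
    proof (rule tendstoI)
      fix e :: real assume "0 < e"
      with conv have "\<forall>\<^sub>F l in sequentially. \<forall>i\<in>{..<n*m}. dist (Re (x (r l) $ i), Im (x (r l) $ i)) (g i) < e" by blast
      thus "\<forall>\<^sub>F l in sequentially. dist (Re (x (r l) $ t), Im (x (r l) $ t)) (g t) < e"
        by eventually_elim (use t in auto)
    qed
    have "(\<lambda>l. Complex (fst (Re (x (r l) $ t), Im (x (r l) $ t))) (snd (Re (x (r l) $ t), Im (x (r l) $ t))))
        \<longlonglongrightarrow> Complex (fst (g t)) (snd (g t))"
      by (intro tendsto_Complex tendsto_fst tendsto_snd P)
    thus ?thesis using t by (simp add: v_def)
  qed
  have "(\<lambda>l. x (r l) \<bullet>c x (r l)) \<longlonglongrightarrow> v \<bullet>c v" using sprod_self_tendsto[OF cv xc vc] .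
  moreover have "(\<lambda>l. x (r l) \<bullet>c x (r l)) = (\<lambda>l. 1)" using x(1) by (simp add: unit_vec_c_def)
  ultimately have "v \<bullet>c v = 1" using LIMSEQ_unique tendsto_const by metis
  hence vu: "unit_vec_c (n*m) v" using vc by (simp add: unit_vec_c_def)
  have vr: "schmidt_rank n m v \<le> k" using SR_closed[of n m "\<lambda>l. x (r l)" v k] cv x(2) by blast
  have G: "(\<lambda>l. G (x (r l))) \<longlonglongrightarrow> G v" using cont[OF xc vc cv] .
  have I: "(\<lambda>l. inverse (real (Suc l))) \<longlonglongrightarrow> 0" by (rule LIMSEQ_inverse_real_of_nat)
  have "(\<lambda>l. G (x (r l)) + inverse (real (Suc l))) \<longlonglongrightarrow> G v + 0" using G I by (rule tendsto_add)
  moreover have "p \<le> G (x (r l)) + inverse (real (Suc l))" for l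
  proof -
    have "l \<le> r l" using seq_suble[OF r] .
    hence "inverse (real (Suc (r l))) \<le> inverse (real (Suc l))" by (simp add: le_imp_inverse_le)
    thus ?thesis using x(3)[of "r l"] by linarith
  qed
  ultimately have "p \<le> G v + 0" by (intro tendsto_lowerbound) (auto intro: always_eventually)
  thus ?thesis using vu vr by auto
qed

lemma cf_tendsto:
  assumes U: "U \<in> carrier_mat N N" and i: "i < N"
    and x: "\<And>t. t < N \<Longrightarrow> (\<lambda>l. x l $ t) \<longlonglongrightarrow> v $ t"
    and xc: "\<And>l. x l \<in> carrier_vec N" and vc: "v \<in> carrier_vec N"
  shows "(\<lambda>l. cf U (x l) i) \<longlonglongrightarrow> cf U v i"
proof -
  have e: "cf U w i = (\<Sum>b<N. mat_adjoint U $$ (i,b) * w $ b)" if "w \<in> carrier_vec N" for w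
    using that i adj_carrier[OF U] by (simp add: cf_def scalar_prod_def lessThan_atLeast0)
  show ?thesis unfolding e[OF xc] e[OF vc] using x by (intro tendsto_intros) auto
qed


lemma zc: "z * cnj z = complex_of_real ((cmod z)\<^sup>2)"
  by (rule complex_norm_square[symmetric])

locale ctx =
  fixes n m k :: nat and U :: "complex mat" and lam :: "nat \<Rightarrow> real"
  assumes npos: "0 < n" and mpos: "0 < m" and k1: "1 \<le> k"
    and U: "U \<in> carrier_mat (n*m) (n*m)" and UU: "mat_adjoint U * U = 1\<^sub>m (n*m)"

context ctx
begin

lemma spec_carrier: "spec_fun (n*m) U lam f \<in> carrier_mat (n*m) (n*m)"
  unfolding spec_fun_def by (rule mult_carrier_mat[OF mult_carrier_mat[OF U real_diag_carrier] adj_carrier[OF U]])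

lemma qs:
  assumes "v \<in> carrier_vec (n*m)" "w \<in> carrier_vec (n*m)"
  shows "(spec_fun (n*m) U lam f *\<^sub>v v) \<bullet>c w
     = (\<Sum>i<n*m. complex_of_real (f (lam i)) * cf U v i * cnj (cf U w i))"
  unfolding spec_fun_def by (rule quad[OF U assms])

lemma qself:
  assumes "v \<in> carrier_vec (n*m)"
  shows "(spec_fun (n*m) U lam f *\<^sub>v v) \<bullet>c v
     = complex_of_real (\<Sum>i<n*m. f (lam i) * (cmod (cf U v i))\<^sup>2)"
  unfolding qs[OF assms assms] of_real_sum
  by (rule sum.cong) (simp_all add: zc mult.assoc)

lemma pars:
  assumes "v \<in> carrier_vec (n*m)"
  shows "v \<bullet>c v = complex_of_real (\<Sum>i<n*m. (cmod (cf U v i))\<^sup>2)"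
  unfolding parseval[OF U UU assms] of_real_sum
  by (rule sum.cong) (simp_all add: zc)

lemma pars_unit: "unit_vec_c (n*m) v \<Longrightarrow> (\<Sum>i<n*m. (cmod (cf U v i))\<^sup>2) = 1"
  unfolding unit_vec_c_def using pars by (metis of_real_eq_1_iff)

lemma cf_smult: "v \<in> carrier_vec (n*m) \<Longrightarrow> i < n*m \<Longrightarrow> cf U (a \<cdot>\<^sub>v v) i = a * cf U v i"
  unfolding cf_def using mult_mat_vec[OF adj_carrier[OF U]] adj_carrier[OF U] by simp

definition FF :: "complex vec \<Rightarrow> real" where
  "FF v = (\<Sum>i<n*m. (if lam i < 0 then 1 else 0) * (cmod (cf U v i))\<^sup>2)"

lemma FF_cont:
  assumes "\<And>l. x l \<in> carrier_vec (n*m)" "v \<in> carrier_vec (n*m)"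
    "\<And>t. t < n*m \<Longrightarrow> (\<lambda>l. x l $ t) \<longlonglongrightarrow> v $ t"
  shows "(\<lambda>l. FF (x l)) \<longlonglongrightarrow> FF v"
  unfolding FF_def
  by (intro tendsto_intros cf_tendsto[OF U _ assms(3) assms(1) assms(2)]) auto

lemma amgm:
  assumes "unit_vec_c (n*m) v" "unit_vec_c (n*m) w"
  shows "cmod ((neg_proj (n*m) U lam *\<^sub>v v) \<bullet>c w) \<le> (FF v + FF w) / 2"
proof -
  have vc: "v \<in> carrier_vec (n*m)" and wc: "w \<in> carrier_vec (n*m)" using assms by (auto simp: unit_vec_c_def)
  have "cmod ((neg_proj (n*m) U lam *\<^sub>v v) \<bullet>c w)
      = cmod (\<Sum>i<n*m. complex_of_real (if lam i < 0 then 1 else 0) * cf U v i * cnj (cf U w i))"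
    unfolding neg_proj_def qs[OF vc wc] by simp
  also have "\<dots> \<le> (\<Sum>i<n*m. cmod (complex_of_real (if lam i < 0 then 1 else 0) * cf U v i * cnj (cf U w i)))"
    by (rule norm_sum)
  also have "\<dots> \<le> (\<Sum>i<n*m. (if lam i < 0 then 1 else 0) * ((cmod (cf U v i))\<^sup>2 + (cmod (cf U w i))\<^sup>2) / 2)"
  proof (rule sum_mono)
    fix i
    have "cmod (cf U v i) * cmod (cf U w i) \<le> ((cmod (cf U v i))\<^sup>2 + (cmod (cf U w i))\<^sup>2) / 2"
      using sum_squares_bound[of "cmod (cf U v i)" "cmod (cf U w i)"] by (simp add: power2_eq_square)
    thus "cmod (complex_of_real (if lam i < 0 then 1 else 0) * cf U v i * cnj (cf U w i))
        \<le> (if lam i < 0 then 1 else 0) * ((cmod (cf U v i))\<^sup>2 + (cmod (cf U w i))\<^sup>2) / 2"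
      by (simp add: norm_mult)
  qed
  also have "\<dots> = (\<Sum>i<n*m. (if lam i < 0 then 1 else 0) * (cmod (cf U v i))\<^sup>2 / 2 + (if lam i < 0 then 1 else 0) * (cmod (cf U w i))\<^sup>2 / 2)"
    by (rule sum.cong) (simp_all add: distrib_left add_divide_distrib)
  also have "\<dots> = (FF v + FF w) / 2"
    unfolding FF_def by (simp only: sum.distrib sum_divide_distrib[symmetric] add_divide_distrib)
  finally show ?thesis .
qed

lemma FF_attain:
  "\<exists>v. unit_vec_c (n*m) v \<and> schmidt_rank n m v \<le> k \<and> sk_norm n m k (neg_proj (n*m) U lam) \<le> FF v"
proof (rule attain[where G = FF])
  fix x :: "nat \<Rightarrow> complex vec" and v :: "complex vec" assume "\<And>l. x l \<in> carrier_vec (n*m)" "v \<in> carrier_vec (n*m)"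
    "\<And>t. t < n*m \<Longrightarrow> (\<lambda>l. x l $ t) \<longlonglongrightarrow> v $ t"
  thus "(\<lambda>l. FF (x l)) \<longlonglongrightarrow> FF v" by (rule FF_cont)
next
  fix e :: real assume e: "0 < e"
  obtain v w where vw: "unit_vec_c (n*m) v" "unit_vec_c (n*m) w" "schmidt_rank n m v \<le> k" "schmidt_rank n m w \<le> k"
    "sk_norm n m k (neg_proj (n*m) U lam) - e < cmod ((neg_proj (n*m) U lam *\<^sub>v v) \<bullet>c w)"
    using sk_approx[OF _ npos mpos k1 e] spec_carrier unfolding neg_proj_def by blast
  have "sk_norm n m k (neg_proj (n*m) U lam) - e < (FF v + FF w) / 2"
    using vw(5) amgm[OF vw(1,2)] by linarith
  hence "sk_norm n m k (neg_proj (n*m) U lam) - e < FF v \<or> sk_norm n m k (neg_proj (n*m) U lam) - e < FF w"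
  proof (rule contrapos_pp)
    assume "\<not> (sk_norm n m k (neg_proj (n*m) U lam) - e < FF v \<or> sk_norm n m k (neg_proj (n*m) U lam) - e < FF w)"
    hence "FF v \<le> sk_norm n m k (neg_proj (n*m) U lam) - e" "FF w \<le> sk_norm n m k (neg_proj (n*m) U lam) - e"
      by auto
    hence "FF v + FF w \<le> 2 * (sk_norm n m k (neg_proj (n*m) U lam) - e)" by simp
    thus "\<not> sk_norm n m k (neg_proj (n*m) U lam) - e < (FF v + FF w) / 2" by (simp add: not_less field_simps)
  qed
  thus "\<exists>v. unit_vec_c (n*m) v \<and> schmidt_rank n m v \<le> k \<and> sk_norm n m k (neg_proj (n*m) U lam) - e < FF v"
    using vw by blast
qed

end


lemma sprodc_add:
  fixes a b u :: "complex vec"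
  assumes a: "a \<in> carrier_vec N" and b: "b \<in> carrier_vec N" and u: "u \<in> carrier_vec N"
  shows "(a + b) \<bullet>c u = a \<bullet>c u + b \<bullet>c u"
proof -
  have "(a + b) \<bullet>c u = (\<Sum>i<N. (a + b) $ i * cnj (u $ i))" by (rule sprodc_sum[OF u])
  also have "\<dots> = (\<Sum>i<N. a $ i * cnj (u $ i) + b $ i * cnj (u $ i))"
    by (rule sum.cong) (use a b in \<open>auto simp: distrib_right\<close>)
  also have "\<dots> = a \<bullet>c u + b \<bullet>c u" by (simp add: sum.distrib sprodc_sum[OF u])
  finally show ?thesis .
qed

context ctx begin

lemma part1:
  assumes X: "X = spec_fun (n*m) U lam (\<lambda>t. t)"
    and p1: "sk_norm n m k (neg_proj (n*m) U lam) = 1"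
  shows "\<not> k_block_positive n m k X"
proof
  assume kbp: "k_block_positive n m k X"
  obtain v where v: "unit_vec_c (n*m) v" "schmidt_rank n m v \<le> k" "1 \<le> FF v"
    using FF_attain p1 by auto
  have vc: "v \<in> carrier_vec (n*m)" using v(1) by (simp add: unit_vec_c_def)
  define a where "a i = (cmod (cf U v i))\<^sup>2" for i
  have a0: "0 \<le> a i" for i by (simp add: a_def)
  have sa: "(\<Sum>i<n*m. a i) = 1" using pars_unit[OF v(1)] by (simp add: a_def)
  have FFa: "FF v = (\<Sum>i<n*m. (if lam i < 0 then 1 else 0) * a i)" by (simp add: FF_def a_def)
  have "(\<Sum>i<n*m. (if lam i < 0 then 0 else 1) * a i) = (\<Sum>i<n*m. a i) - FF v"
    unfolding FFa sum_subtractf[symmetric] by (rule sum.cong) auto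
  hence "(\<Sum>i<n*m. (if lam i < 0 then 0 else 1) * a i) = 0"
    using sa v(3) a0 by (smt (verit) sum_nonneg mult_nonneg_nonneg)
  hence z: "\<forall>i\<in>{..<n*m}. (if lam i < 0 then 0 else 1) * a i = 0"
    by (subst (asm) sum_nonneg_eq_0_iff) (auto simp: a0)
  obtain i0 where i0: "i0 < n*m" "lam i0 < 0" "0 < a i0"
  proof (rule ccontr)
    assume "\<not> thesis"
    with that have "\<forall>i<n*m. (if lam i < 0 then 1 else 0) * a i = 0"
      using a0 by (metis less_eq_real_def mult_eq_0_iff)
    hence "FF v = 0" unfolding FFa by (intro sum.neutral) auto
    with v(3) show False by simp
  qed
  have S: "(\<Sum>i<n*m. lam i * a i) < (\<Sum>i<n*m. 0)"
  proof (rule sum_strict_mono_ex1)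
    show "\<forall>i\<in>{..<n*m}. lam i * a i \<le> 0"
    proof
      fix i assume i: "i \<in> {..<n*m}"
      show "lam i * a i \<le> 0"
      proof (cases "lam i < 0")
        case True thus ?thesis using a0[of i] by (simp add: mult_nonpos_nonneg)
      next
        case False
        have "(if lam i < 0 then 0 else 1) * a i = 0" using z i by (rule bspec)
        hence "a i = 0" using False by simp
        thus ?thesis by simp
      qed
    qed
    show "\<exists>i\<in>{..<n*m}. lam i * a i < 0" using i0 by (intro bexI[of _ i0]) (auto simp: mult_neg_pos)
  qed simp
  have "(X *\<^sub>v v) \<bullet>c v = complex_of_real (\<Sum>i<n*m. lam i * a i)"
    unfolding X qself[OF vc] by (simp add: a_def)
  with kbp vc v(2) S show False by (auto simp: k_block_positive_def)
qed


lemma part2: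
  assumes X: "X = spec_fun (n*m) U lam (\<lambda>t. t)" and herm: "hermitian_mat X"
    and q1: "sk_norm n m k (null_proj (n*m) U lam + neg_proj (n*m) U lam) < 1"
    and lb: "\<forall>i < n*m. lam i > 0 \<longrightarrow>
          lam i \<ge> sk_norm n m k (neg_part (n*m) U lam) /
                  (1 - sk_norm n m k (null_proj (n*m) U lam + neg_proj (n*m) U lam))"
  shows "k_block_positive n m k X"
proof -
  define q where "q = sk_norm n m k (null_proj (n*m) U lam + neg_proj (n*m) U lam)"
  define s where "s = sk_norm n m k (neg_part (n*m) U lam)"
  define T where "T = s / (1 - q)"
  have s0: "0 \<le> s" unfolding s_def neg_part_def by (rule sk_nonneg[OF spec_carrier npos mpos k1])
  have q1': "q < 1" using q1 by (simp add: q_def)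
  have T0: "0 \<le> T" using s0 q1' by (simp add: T_def)
  have lbT: "\<And>i. i < n*m \<Longrightarrow> 0 < lam i \<Longrightarrow> T \<le> lam i" using lb by (simp add: T_def s_def q_def)
  have Ts: "T * (1 - q) = s" using q1' by (simp add: T_def)
  have main: "0 \<le> (\<Sum>i<n*m. lam i * (cmod (cf U v i))\<^sup>2)"
    if vc: "v \<in> carrier_vec (n*m)" and vr: "schmidt_rank n m v \<le> k" for v
  proof -
    define a where "a i = (cmod (cf U v i))\<^sup>2" for i
    have a0: "0 \<le> a i" for i by (simp add: a_def)
    define V where "V = (\<Sum>i<n*m. a i)"
    have V0: "0 \<le> V" unfolding V_def by (intro sum_nonneg a0)
    show ?thesis
    proof (cases "V = 0")
      case True
      hence "\<forall>i\<in>{..<n*m}. a i = 0" unfolding V_def by (subst (asm) sum_nonneg_eq_0_iff) (auto simp: a0)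
      thus ?thesis by (simp add: a_def)
    next
      case False
      hence Vp: "0 < V" using V0 by simp
      define c where "c = complex_of_real (1 / sqrt V)"
      have c0: "c \<noteq> 0" using Vp by (simp add: c_def)
      define u where "u = c \<cdot>\<^sub>v v"
      have uc: "u \<in> carrier_vec (n*m)" using vc by (simp add: u_def)
      have ur: "schmidt_rank n m u \<le> k" unfolding u_def by (rule SR_scale[OF vr c0 vc])
      define b where "b i = (cmod (cf U u i))\<^sup>2" for i
      have b0: "0 \<le> b i" for i by (simp add: b_def)
      have ab: "a i = V * b i" if i: "i < n*m" for i
      proof -
        have "cmod (cf U u i) = cmod (cf U v i) / sqrt V"
          unfolding u_def cf_smult[OF vc i] c_def using Vp by (simp add: norm_mult norm_divide)
        hence "b i = (cmod (cf U v i))\<^sup>2 / V" unfolding b_def using Vp by (simp add: power_divide)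
        thus ?thesis unfolding a_def using Vp by simp
      qed
      have sb: "(\<Sum>i<n*m. b i) = 1"
      proof -
        have "(\<Sum>i<n*m. b i) = (\<Sum>i<n*m. a i / V)" using ab Vp by (intro sum.cong) auto
        also have "\<dots> = 1" using Vp by (simp add: sum_divide_distrib[symmetric] V_def)
        finally show ?thesis .
      qed
      have e2: "(\<Sum>i<n*m. (cmod (cf U u i))\<^sup>2) = 1" using sb unfolding b_def .
      have "u \<bullet>c u = 1" unfolding pars[OF uc] e2 by simp
      hence uu: "unit_vec_c (n*m) u" using uc by (simp add: unit_vec_c_def)
      have "cmod ((neg_part (n*m) U lam *\<^sub>v u) \<bullet>c u) \<le> s"
        unfolding s_def neg_part_def by (rule sk_le[OF spec_carrier uu uu ur ur])
      moreover have "cmod ((neg_part (n*m) U lam *\<^sub>v u) \<bullet>c u) = \<bar>\<Sum>i<n*m. (if lam i < 0 then lam i else 0) * b i\<bar>"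
        unfolding neg_part_def qself[OF uc] norm_of_real b_def by (rule refl)
      ultimately have neg: "- s \<le> (\<Sum>i<n*m. (if lam i < 0 then lam i else 0) * b i)"
        by (simp add: abs_le_iff)
      have "((null_proj (n*m) U lam + neg_proj (n*m) U lam) *\<^sub>v u) \<bullet>c u
          = (null_proj (n*m) U lam *\<^sub>v u) \<bullet>c u + (neg_proj (n*m) U lam *\<^sub>v u) \<bullet>c u"
        using spec_carrier uc unfolding null_proj_def neg_proj_def
        by (simp add: add_mult_distrib_mat_vec[of _ "n*m" "n*m"] sprodc_add[OF mult_mat_vec_carrier[OF spec_carrier uc] mult_mat_vec_carrier[OF spec_carrier uc] uc])
      also have "\<dots> = complex_of_real ((\<Sum>i<n*m. (if lam i = 0 then 1 else 0) * b i) + (\<Sum>i<n*m. (if lam i < 0 then 1 else 0) * b i))"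
        unfolding null_proj_def neg_proj_def qself[OF uc] b_def by (simp only: of_real_add)
      finally have "cmod (((null_proj (n*m) U lam + neg_proj (n*m) U lam) *\<^sub>v u) \<bullet>c u)
          = \<bar>(\<Sum>i<n*m. (if lam i = 0 then 1 else 0) * b i) + (\<Sum>i<n*m. (if lam i < 0 then 1 else 0) * b i)\<bar>"
        by (simp only: norm_of_real)
      moreover have "cmod (((null_proj (n*m) U lam + neg_proj (n*m) U lam) *\<^sub>v u) \<bullet>c u) \<le> q"
        unfolding q_def using spec_carrier unfolding null_proj_def neg_proj_def
        by (intro sk_le[OF _ uu uu ur ur]) auto
      ultimately have nn: "(\<Sum>i<n*m. (if lam i = 0 then 1 else 0) * b i) + (\<Sum>i<n*m. (if lam i < 0 then 1 else 0) * b i) \<le> q"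
        by linarith
      have split1: "(\<Sum>i<n*m. b i) = (\<Sum>i<n*m. (if 0 < lam i then b i else 0)) + ((\<Sum>i<n*m. (if lam i = 0 then 1 else 0) * b i) + (\<Sum>i<n*m. (if lam i < 0 then 1 else 0) * b i))"
        unfolding sum.distrib[symmetric] by (rule sum.cong) auto
      have pos1: "1 - q \<le> (\<Sum>i<n*m. (if 0 < lam i then b i else 0))" using split1 sb nn by linarith
      have split2: "(\<Sum>i<n*m. lam i * b i) = (\<Sum>i<n*m. (if 0 < lam i then lam i * b i else 0)) + (\<Sum>i<n*m. (if lam i < 0 then lam i else 0) * b i)"
        unfolding sum.distrib[symmetric] by (rule sum.cong) auto
      have "(\<Sum>i<n*m. (if 0 < lam i then lam i * b i else 0)) \<ge> (\<Sum>i<n*m. T * (if 0 < lam i then b i else 0))"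
        using lbT b0 by (intro sum_mono) (auto intro: mult_right_mono)
      moreover have "(\<Sum>i<n*m. T * (if 0 < lam i then b i else 0)) \<ge> T * (1 - q)"
        unfolding sum_distrib_left[symmetric] using pos1 T0 by (rule mult_left_mono)
      ultimately have "(\<Sum>i<n*m. (if 0 < lam i then lam i * b i else 0)) \<ge> s" using Ts by linarith
      hence "0 \<le> (\<Sum>i<n*m. lam i * b i)" using split2 neg by linarith
      moreover have "(\<Sum>i<n*m. lam i * a i) = V * (\<Sum>i<n*m. lam i * b i)"
        unfolding sum_distrib_left using ab by (intro sum.cong) auto
      ultimately show ?thesis using Vp by (simp add: a_def)
    qed
  qed
  show ?thesis
    unfolding k_block_positive_def
  proof (intro conjI allI impI herm)
    fix v assume vc: "v \<in> carrier_vec (n*m)" and vr: "schmidt_rank n m v \<le> k"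
    have e: "(X *\<^sub>v v) \<bullet>c v = complex_of_real (\<Sum>i<n*m. lam i * (cmod (cf U v i))\<^sup>2)"
      unfolding X qself[OF vc] by simp
    show "Im ((X *\<^sub>v v) \<bullet>c v) = 0" unfolding e by simp
    show "0 \<le> Re ((X *\<^sub>v v) \<bullet>c v)" unfolding e using main[OF vc vr] by simp
  qed
qed


lemma lam_nonzero:
  assumes X: "X = spec_fun (n*m) U lam (\<lambda>t. t)" and d: "det X \<noteq> 0" and i: "i < n*m"
  shows "lam i \<noteq> 0"
proof
  assume l0: "lam i = 0"
  have D: "real_diag (n*m) lam \<in> carrier_mat (n*m) (n*m)" by (rule real_diag_carrier)
  have "upper_triangular (real_diag (n*m) lam)" by (simp add: upper_triangular_def real_diag_def)
  hence "det (real_diag (n*m) lam) = prod_list (diag_mat (real_diag (n*m) lam))"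
    using det_upper_triangular D by blast
  also have "\<dots> = (\<Prod>j = 0..<n*m. real_diag (n*m) lam $$ (j,j))" by (simp add: prod_list_diag_prod real_diag_def)
  also have "\<dots> = 0" using i l0 by (intro prod_zero) (auto simp: real_diag_def intro!: bexI[of _ i])
  finally have dD: "det (real_diag (n*m) lam) = 0" .
  have "X = U * real_diag (n*m) lam * mat_adjoint U" using X by (simp add: spec_fun_def)
  hence "det X = det (U * real_diag (n*m) lam) * det (mat_adjoint U)"
    using U D adj_carrier[OF U] by (simp add: det_mult[of _ "n*m"])
  also have "\<dots> = 0" using U D dD by (simp add: det_mult[of _ "n*m"])
  finally show False using d by simp
qed

lemma part3:
  assumes X: "X = spec_fun (n*m) U lam (\<lambda>t. t)"
    and p1: "sk_norm n m k (neg_proj (n*m) U lam) < 1"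
    and negeq: "\<forall>i < n*m. \<forall>j < n*m. lam i < 0 \<longrightarrow> lam j < 0 \<longrightarrow> lam i = lam j"
    and d: "det X \<noteq> 0"
    and ub: "\<forall>i < n*m. lam i > 0 \<longrightarrow>
          lam i < sk_norm n m k (neg_part (n*m) U lam) / (1 - sk_norm n m k (neg_proj (n*m) U lam))"
  shows "\<not> k_block_positive n m k X"
proof
  assume kbp: "k_block_positive n m k X"
  define p where "p = sk_norm n m k (neg_proj (n*m) U lam)"
  define s where "s = sk_norm n m k (neg_part (n*m) U lam)"
  define T where "T = s / (1 - p)"
  have p1': "p < 1" using p1 by (simp add: p_def)
  have p0: "0 \<le> p" unfolding p_def neg_proj_def by (rule sk_nonneg[OF spec_carrier npos mpos k1])
  have ubT: "\<And>i. i < n*m \<Longrightarrow> 0 < lam i \<Longrightarrow> lam i < T" using ub by (simp add: T_def s_def p_def)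
  obtain mu where mu0: "0 \<le> mu" and mu: "\<And>i. i < n*m \<Longrightarrow> lam i < 0 \<Longrightarrow> lam i = - mu"
  proof (cases "\<exists>i<n*m. lam i < 0")
    case True
    then obtain i0 where "i0 < n*m" "lam i0 < 0" by blast
    thus ?thesis using negeq that[of "- lam i0"] by auto
  next
    case False thus ?thesis using that[of 0] by auto
  qed
  have nz: "\<And>i. i < n*m \<Longrightarrow> lam i \<noteq> 0" using lam_nonzero[OF X d] .
  have smu: "s \<le> mu * p"
    unfolding s_def
  proof (rule sk_least[OF npos mpos k1])
    fix v w assume vw: "unit_vec_c (n*m) v" "unit_vec_c (n*m) w" "schmidt_rank n m v \<le> k" "schmidt_rank n m w \<le> k"
    have vc: "v \<in> carrier_vec (n*m)" and wc: "w \<in> carrier_vec (n*m)" using vw by (auto simp: unit_vec_c_def)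
    have "(neg_part (n*m) U lam *\<^sub>v v) \<bullet>c w = complex_of_real (- mu) * ((neg_proj (n*m) U lam *\<^sub>v v) \<bullet>c w)"
      unfolding neg_part_def neg_proj_def qs[OF vc wc] sum_distrib_left
    proof (rule sum.cong[OF refl])
      fix i assume i: "i \<in> {..<n*m}"
      show "complex_of_real (if lam i < 0 then lam i else 0) * cf U v i * cnj (cf U w i) =
        complex_of_real (- mu) * (complex_of_real (if lam i < 0 then 1 else 0) * cf U v i * cnj (cf U w i))"
      proof (cases "lam i < 0")
        case True
        hence "lam i = - mu" using mu i by auto
        thus ?thesis using True by simp
      qed simp
    qed
    hence "cmod ((neg_part (n*m) U lam *\<^sub>v v) \<bullet>c w) = mu * cmod ((neg_proj (n*m) U lam *\<^sub>v v) \<bullet>c w)"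
      using mu0 by (simp add: norm_mult)
    also have "\<dots> \<le> mu * p" unfolding p_def neg_proj_def
      by (intro mult_left_mono mu0 sk_le[OF spec_carrier vw])
    finally show "cmod ((neg_part (n*m) U lam *\<^sub>v v) \<bullet>c w) \<le> mu * p" .
  qed
  obtain v where v: "unit_vec_c (n*m) v" "schmidt_rank n m v \<le> k" "p \<le> FF v"
    using FF_attain unfolding p_def by auto
  have vc: "v \<in> carrier_vec (n*m)" using v(1) by (simp add: unit_vec_c_def)
  define a where "a i = (cmod (cf U v i))\<^sup>2" for i
  have a0: "0 \<le> a i" for i by (simp add: a_def)
  have sa: "(\<Sum>i<n*m. a i) = 1" using pars_unit[OF v(1)] by (simp add: a_def)
  define q where "q = FF v"
  have FFa: "q = (\<Sum>i<n*m. (if lam i < 0 then 1 else 0) * a i)" by (simp add: q_def FF_def a_def)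
  have pq: "p \<le> q" using v(3) by (simp add: q_def)
  have split1: "(\<Sum>i<n*m. a i) = (\<Sum>i<n*m. (if 0 < lam i then a i else 0)) + q"
    unfolding FFa sum.distrib[symmetric] by (rule sum.cong) (use nz in \<open>auto simp: not_less_iff_gr_or_eq\<close>)
  have P: "(\<Sum>i<n*m. (if 0 < lam i then a i else 0)) = 1 - q" using split1 sa by linarith
  have P0: "0 \<le> (\<Sum>i<n*m. (if 0 < lam i then a i else 0))" by (intro sum_nonneg) (auto simp: a0)
  have split2: "(\<Sum>i<n*m. lam i * a i) = (\<Sum>i<n*m. (if 0 < lam i then lam i * a i else 0)) + (- mu) * q"
    unfolding FFa sum_distrib_left sum.distrib[symmetric]
  proof (rule sum.cong[OF refl])
    fix i assume i: "i \<in> {..<n*m}"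
    show "lam i * a i = (if 0 < lam i then lam i * a i else 0) + - mu * ((if lam i < 0 then 1 else 0) * a i)"
    proof (cases "lam i < 0")
      case True
      hence "lam i = - mu" using mu i by auto
      thus ?thesis using True by simp
    next
      case False
      hence "0 < lam i" using nz[of i] i by auto
      thus ?thesis by simp
    qed
  qed
  have neg: "(\<Sum>i<n*m. lam i * a i) < 0"
  proof (cases "(\<Sum>i<n*m. (if 0 < lam i then a i else 0)) = 0")
    case True
    hence z: "\<forall>i\<in>{..<n*m}. (if 0 < lam i then a i else 0) = 0"
      by (subst (asm) sum_nonneg_eq_0_iff) (auto simp: a0)
    have "(\<Sum>i<n*m. (if 0 < lam i then lam i * a i else 0)) = 0"
      using z by (intro sum.neutral) (auto split: if_splits)
    moreover have q1: "q = 1" using True P by simp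
    moreover have "0 < mu"
    proof -
      obtain i0 where "i0 < n*m" "lam i0 < 0"
      proof (rule ccontr)
        assume "\<not> thesis"
        with that have "q = 0" unfolding FFa by (intro sum.neutral) auto
        with q1 show False by simp
      qed
      with mu show ?thesis by fastforce
    qed
    ultimately show ?thesis using split2 by simp
  next
    case False
    hence Pp: "0 < (\<Sum>i<n*m. (if 0 < lam i then a i else 0))" using P0 by simp
    obtain i0 where i0: "i0 < n*m" "0 < lam i0" "0 < a i0"
    proof (rule ccontr)
      assume "\<not> thesis"
      with that have "\<forall>i<n*m. (if 0 < lam i then a i else 0) = 0" using a0 by (metis less_eq_real_def)
      hence "(\<Sum>i<n*m. (if 0 < lam i then a i else 0)) = 0" by simp
      with Pp show False by simp
    qed
    have "(\<Sum>i<n*m. (if 0 < lam i then lam i * a i else 0)) < (\<Sum>i<n*m. T * (if 0 < lam i then a i else 0))"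
    proof (rule sum_strict_mono_ex1)
      show "\<forall>i\<in>{..<n*m}. (if 0 < lam i then lam i * a i else 0) \<le> T * (if 0 < lam i then a i else 0)"
        using ubT a0 by (auto intro: mult_right_mono less_imp_le)
      show "\<exists>i\<in>{..<n*m}. (if 0 < lam i then lam i * a i else 0) < T * (if 0 < lam i then a i else 0)"
        using i0 ubT[of i0] by (intro bexI[of _ i0]) (auto intro: mult_strict_right_mono)
    qed simp
    also have "\<dots> = T * (1 - q)" unfolding sum_distrib_left[symmetric] P ..
    finally have lt: "(\<Sum>i<n*m. (if 0 < lam i then lam i * a i else 0)) < T * (1 - q)" .
    have q1: "q \<le> 1" using P P0 by linarith
    have "T \<le> mu * p / (1 - p)" unfolding T_def using smu p1' by (intro divide_right_mono) auto
    hence "T * (1 - q) \<le> mu * p / (1 - p) * (1 - q)" using q1 by (intro mult_right_mono) auto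
    also have "\<dots> \<le> mu * q"
    proof -
      have "mu * p * (1 - q) \<le> mu * q * (1 - p)"
      proof -
        have "mu * p * (1 - q) - mu * q * (1 - p) = mu * (p - q)" by (simp add: algebra_simps)
        also have "\<dots> \<le> 0" using mu0 pq by (simp add: mult_nonneg_nonpos)
        finally show ?thesis by simp
      qed
      thus ?thesis using p1' by (simp add: field_simps)
    qed
    finally show ?thesis using lt split2 by linarith
  qed
  have "(X *\<^sub>v v) \<bullet>c v = complex_of_real (\<Sum>i<n*m. lam i * a i)"
    unfolding X qself[OF vc] by (simp add: a_def)
  with kbp vc v(2) neg show False by (auto simp: k_block_positive_def)
qed

end


theorem theorem5p1:
  fixes n m k :: nat and X U :: "complex mat" and lam :: "nat \<Rightarrow> real"
  assumes "m \<le> n" and "1 \<le> k" and "k \<le> m"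
    and "X \<in> carrier_mat (n*m) (n*m)" and "hermitian_mat X"
    and "eigenbasis (n*m) X U lam"
  shows
    "(sk_norm n m k (neg_proj (n*m) U lam) = 1 \<longrightarrow> \<not> k_block_positive n m k X)
     \<and>
     ((sk_norm n m k (null_proj (n*m) U lam + neg_proj (n*m) U lam) < 1 \<and>
       (\<forall>i < n*m. lam i > 0 \<longrightarrow>
          lam i \<ge> sk_norm n m k (neg_part (n*m) U lam) /
                  (1 - sk_norm n m k (null_proj (n*m) U lam + neg_proj (n*m) U lam))))
      \<longrightarrow> k_block_positive n m k X)
     \<and>
     ((sk_norm n m k (neg_proj (n*m) U lam) < 1 \<and>
       (\<forall>i < n*m. \<forall>j < n*m. lam i < 0 \<longrightarrow> lam j < 0 \<longrightarrow> lam i = lam j) \<and>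
       det X \<noteq> 0 \<and>
       (\<forall>i < n*m. lam i > 0 \<longrightarrow>
          lam i < sk_norm n m k (neg_part (n*m) U lam) / (1 - sk_norm n m k (neg_proj (n*m) U lam))))
      \<longrightarrow> \<not> k_block_positive n m k X)"
proof -
  have U: "U \<in> carrier_mat (n*m) (n*m)" and UU: "mat_adjoint U * U = 1\<^sub>m (n*m)"
    and XU: "X = U * real_diag (n*m) lam * mat_adjoint U"
    using assms(6) by (auto simp: eigenbasis_def)
  have X: "X = spec_fun (n*m) U lam (\<lambda>t. t)" using XU by (simp add: spec_fun_def)
  have "0 < m" "0 < n" using assms(1-3) by auto
  then interpret ctx n m k U lam using assms(2) U UU by unfold_locales auto
  show ?thesis
    using part1[OF X] part2[OF X assms(5)] part3[OF X] by blast
qed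


end
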